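(* Let $H$ be a bialgebra over a commutative ring $\Bbbk$ and $A$ a right $H$-comodule algebra, with coaction $a\mapsto a^{(1)}\otimes a^{(2)}\in A\otimes H$. Then the maps $\Phi:(H^{\otimes n})^\vee\to\mathrm{Hom}_\Bbbk(A^{\otimes n},A)$ sending $f:H^{\otimes n}\to\Bbbk$ to $F(a_1\otimes\dots\otimes a_n)=a_1^{(1)}\cdots a_n^{(1)}f(a_1^{(2)}\otimes\dots\otimes a_n^{(2)})$ define a morphism of linear operads with multiplication from the operad $\mathcal{O}^H$ (whose cochain complex is $B(H)^\vee$) to the endomorphism operad $\mathcal{E}nd(A)$. In particular $\Phi$ induces a morphism of Gerstenhaber algebras $H^*(\Phi):\mathrm{Ext}^*_H(\Bbbk,\Bbbk)\to HH^*(A,A)$.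
   Context: A right $H$-comodule algebra is an algebra $A$ with a right $H$-coaction that is an algebra morphism $A\to A\otimes H$. $\mathcal{O}^H(n)=\mathrm{Hom}(H^{\otimes n},\Bbbk)$ with $(f\circ_ig)(a_1\otimes\dots\otimes a_{m+n-1})=f(a_1\otimes\dots\otimes a_{i-1}\otimes a_i^{(1)}\cdots a_{i+n-1}^{(1)}g(a_i^{(2)}\otimes\dots\otimes a_{i+n-1}^{(2)})\otimes a_{i+n}\otimes\dots\otimes a_{m+n-1})$ (coproduct $\Delta a=a^{(1)}\otimes a^{(2)}$ in $H$), identity $\varepsilon$, multiplication $\varepsilon\circ\mu_H$, $e=\mathrm{id}_\Bbbk$. $\mathcal{E}nd(A)(n)=\mathrm{Hom}(A^{\otimes n},A)$ with $\gamma(f;g_1,\dots,g_n)=f\circ(g_1\otimes\dots\otimes g_n)$, identity $\mathrm{id}_A$, multiplication the product of $A$, $e$ the unit. For an operad with multiplication, cohomology of the cochain complex ($df=\mu\circ_2f+\sum_i(-1)^if\circ_i\mu+(-1)^{n+1}\mu\circ_1f$) is a Gerstenhaber algebra with cup product $(\mu\circ_1f)\circ_{m+1}g$ and bracket $\{f,g\}=f\bar\circ g-(-1)^{(m-1)(n-1)}g\bar\circ f$, $f\bar\circ g=(-1)^{(m-1)(n-1)}\sum_i(-1)^{(n-1)(i-1)}f\circ_ig$; for $\mathcal{O}^H$ this gives $\mathrm{Ext}^*_H(\Bbbk,\Bbbk)$ and for $\mathcal{E}nd(A)$ it gives $HH^*(A,A)$. *)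

theory Defs
  imports Complex_Main
begin

section \<open>Tensor products as quotients of free modules (by multilinearity relations)\<close>

definition dlt :: "'g \<Rightarrow> 'g \<Rightarrow> 'k::comm_ring_1" where
  "dlt g = (\<lambda>x. if x = g then 1 else 0)"

definition free_vec :: "'g list \<Rightarrow> 'g \<Rightarrow> 'k::comm_ring_1" where
  "free_vec xs = (\<lambda>g. of_nat (count_list xs g))"

text \<open>Submodule of relations for \<open>H\<^sup>\<otimes>\<^sup>m\<close> (generators: lists of elements of H).\<close>
inductive tspanH :: "('k::comm_ring_1 \<Rightarrow> 'h::ab_group_add \<Rightarrow> 'h) \<Rightarrow> ('h list \<Rightarrow> 'k) \<Rightarrow> bool"
  for sH where
  zero: "tspanH sH (\<lambda>_. 0)"
| add: "tspanH sH v \<Longrightarrow> tspanH sH w \<Longrightarrow> tspanH sH (\<lambda>g. v g + w g)"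
| smult: "tspanH sH v \<Longrightarrow> tspanH sH (\<lambda>g. c * v g)"
| addH: "tspanH sH (\<lambda>g. dlt (us @ [x + y] @ vs) g - dlt (us @ [x] @ vs) g - dlt (us @ [y] @ vs) g)"
| smH: "tspanH sH (\<lambda>g. dlt (us @ [sH c x] @ vs) g - c * dlt (us @ [x] @ vs) g)"

text \<open>Submodule of relations for \<open>A \<otimes> H\<^sup>\<otimes>\<^sup>m\<close> (generators: pairs of an element of A and a list of elements of H).\<close>
inductive tspanAH :: "('k::comm_ring_1 \<Rightarrow> 'a::ab_group_add \<Rightarrow> 'a) \<Rightarrow> ('k \<Rightarrow> 'h::ab_group_add \<Rightarrow> 'h)
    \<Rightarrow> ('a \<times> 'h list \<Rightarrow> 'k) \<Rightarrow> bool"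
  for sA sH where
  zero: "tspanAH sA sH (\<lambda>_. 0)"
| add: "tspanAH sA sH v \<Longrightarrow> tspanAH sA sH w \<Longrightarrow> tspanAH sA sH (\<lambda>g. v g + w g)"
| smult: "tspanAH sA sH v \<Longrightarrow> tspanAH sA sH (\<lambda>g. c * v g)"
| addA: "tspanAH sA sH (\<lambda>g. dlt (x + y, hs) g - dlt (x, hs) g - dlt (y, hs) g)"
| smA: "tspanAH sA sH (\<lambda>g. dlt (sA c x, hs) g - c * dlt (x, hs) g)"
| addH: "tspanAH sA sH (\<lambda>g. dlt (a, us @ [x + y] @ vs) g - dlt (a, us @ [x] @ vs) g - dlt (a, us @ [y] @ vs) g)"
| smH: "tspanAH sA sH (\<lambda>g. dlt (a, us @ [sH c x] @ vs) g - c * dlt (a, us @ [x] @ vs) g)"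

text \<open>Equality in \<open>H\<^sup>\<otimes>\<^sup>m\<close> of two finite sums of pure tensors.\<close>
definition teqH :: "('k::comm_ring_1 \<Rightarrow> 'h::ab_group_add \<Rightarrow> 'h) \<Rightarrow> 'h list list \<Rightarrow> 'h list list \<Rightarrow> bool" where
  "teqH sH xs ys \<longleftrightarrow> tspanH sH (\<lambda>g. free_vec xs g - free_vec ys g)"

text \<open>Equality in \<open>A \<otimes> H\<^sup>\<otimes>\<^sup>m\<close> of two finite sums of pure tensors.\<close>
definition teqAH :: "('k::comm_ring_1 \<Rightarrow> 'a::ab_group_add \<Rightarrow> 'a) \<Rightarrow> ('k \<Rightarrow> 'h::ab_group_add \<Rightarrow> 'h)
    \<Rightarrow> ('a \<times> 'h list) list \<Rightarrow> ('a \<times> 'h list) list \<Rightarrow> bool" where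
  "teqAH sA sH xs ys \<longleftrightarrow> tspanAH sA sH (\<lambda>g. free_vec xs g - free_vec ys g)"

definition k_algebra :: "('k::comm_ring_1 \<Rightarrow> 'r::ring_1 \<Rightarrow> 'r) \<Rightarrow> bool" where
  "k_algebra s \<longleftrightarrow> module s \<and> (\<forall>c x y. s c (x * y) = s c x * y \<and> s c (x * y) = x * s c y)"

text \<open>Coproduct \<open>\<Delta> x = \<Sum> u \<otimes> v\<close> is represented by a list of pairs \<open>(u, v)\<close>.\<close>
definition bialgebra :: "('k::comm_ring_1 \<Rightarrow> 'h::ring_1 \<Rightarrow> 'h) \<Rightarrow> ('h \<Rightarrow> ('h \<times> 'h) list) \<Rightarrow> ('h \<Rightarrow> 'k) \<Rightarrow> bool" where
  "bialgebra sH \<Delta> \<epsilon> \<longleftrightarrow>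
     k_algebra sH \<and>
     (\<forall>x y. \<epsilon> (x + y) = \<epsilon> x + \<epsilon> y) \<and> (\<forall>c x. \<epsilon> (sH c x) = c * \<epsilon> x) \<and>
     (\<forall>x y. \<epsilon> (x * y) = \<epsilon> x * \<epsilon> y) \<and> \<epsilon> 1 = 1 \<and>
     (\<forall>x y. teqH sH [[u, v]. (u, v) \<leftarrow> \<Delta> (x + y)] [[u, v]. (u, v) \<leftarrow> \<Delta> x @ \<Delta> y]) \<and>
     (\<forall>c x. teqH sH [[u, v]. (u, v) \<leftarrow> \<Delta> (sH c x)] [[sH c u, v]. (u, v) \<leftarrow> \<Delta> x]) \<and>
     (\<forall>x. teqH sH [[u1, u2, v]. (u, v) \<leftarrow> \<Delta> x, (u1, u2) \<leftarrow> \<Delta> u]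
                  [[u, v1, v2]. (u, v) \<leftarrow> \<Delta> x, (v1, v2) \<leftarrow> \<Delta> v]) \<and>
     (\<forall>x. sum_list [sH (\<epsilon> u) v. (u, v) \<leftarrow> \<Delta> x] = x) \<and>
     (\<forall>x. sum_list [sH (\<epsilon> v) u. (u, v) \<leftarrow> \<Delta> x] = x) \<and>
     (\<forall>x y. teqH sH [[u, v]. (u, v) \<leftarrow> \<Delta> (x * y)] [[u * u', v * v']. (u, v) \<leftarrow> \<Delta> x, (u', v') \<leftarrow> \<Delta> y]) \<and>
     teqH sH [[u, v]. (u, v) \<leftarrow> \<Delta> 1] [[1, 1]]"

text \<open>Right coaction \<open>\<rho> a = \<Sum> a\<^sup>(\<^sup>1\<^sup>) \<otimes> a\<^sup>(\<^sup>2\<^sup>)\<close>, represented by a list of pairs.\<close>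
definition comodule_algebra :: "('k::comm_ring_1 \<Rightarrow> 'a::ring_1 \<Rightarrow> 'a) \<Rightarrow> ('k \<Rightarrow> 'h::ring_1 \<Rightarrow> 'h)
    \<Rightarrow> ('h \<Rightarrow> ('h \<times> 'h) list) \<Rightarrow> ('h \<Rightarrow> 'k) \<Rightarrow> ('a \<Rightarrow> ('a \<times> 'h) list) \<Rightarrow> bool" where
  "comodule_algebra sA sH \<Delta> \<epsilon> \<rho> \<longleftrightarrow>
     k_algebra sA \<and>
     (\<forall>x y. teqAH sA sH [(a, [h]). (a, h) \<leftarrow> \<rho> (x + y)] [(a, [h]). (a, h) \<leftarrow> \<rho> x @ \<rho> y]) \<and>
     (\<forall>c x. teqAH sA sH [(a, [h]). (a, h) \<leftarrow> \<rho> (sA c x)] [(sA c a, [h]). (a, h) \<leftarrow> \<rho> x]) \<and>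
     (\<forall>x. teqAH sA sH [(a', [h', h]). (a, h) \<leftarrow> \<rho> x, (a', h') \<leftarrow> \<rho> a]
                      [(a, [h1, h2]). (a, h) \<leftarrow> \<rho> x, (h1, h2) \<leftarrow> \<Delta> h]) \<and>
     (\<forall>x. sum_list [sA (\<epsilon> h) a. (a, h) \<leftarrow> \<rho> x] = x) \<and>
     (\<forall>x y. teqAH sA sH [(a, [h]). (a, h) \<leftarrow> \<rho> (x * y)] [(a * b, [h * k]). (a, h) \<leftarrow> \<rho> x, (b, k) \<leftarrow> \<rho> y]) \<and>
     teqAH sA sH [(a, [h]). (a, h) \<leftarrow> \<rho> 1] [(1, [1])]"

text \<open>An n-ary operation is a function on lists, only its values on lists of length n matter;
  k-linear maps out of \<open>X\<^sup>\<otimes>\<^sup>n\<close> are identified with n-multilinear maps on \<open>X\<^sup>n\<close>.\<close>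
definition multilin :: "('k \<Rightarrow> 'x \<Rightarrow> 'x) \<Rightarrow> ('k \<Rightarrow> 'v \<Rightarrow> 'v) \<Rightarrow> nat \<Rightarrow> ('x::plus list \<Rightarrow> 'v::plus) \<Rightarrow> bool" where
  "multilin sX sV n f \<longleftrightarrow>
     (\<forall>xs ys x y. length xs + length ys + 1 = n \<longrightarrow>
        f (xs @ [x + y] @ ys) = f (xs @ [x] @ ys) + f (xs @ [y] @ ys)) \<and>
     (\<forall>xs ys x c. length xs + length ys + 1 = n \<longrightarrow>
        f (xs @ [sX c x] @ ys) = sV c (f (xs @ [x] @ ys)))"

fun sweedler :: "('x \<Rightarrow> ('y \<times> 'z) list) \<Rightarrow> 'x list \<Rightarrow> ('y list \<times> 'z list) list" where
  "sweedler D [] = [([], [])]"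
| "sweedler D (x # xs) = [(y # ys, z # zs). (y, z) \<leftarrow> D x, (ys, zs) \<leftarrow> sweedler D xs]"

text \<open>Partial composition \<open>f \<circ>\<^sub>i g\<close> in \<open>\<O>\<^sup>H\<close> (g of arity n, i counted from 1).\<close>
definition compH :: "('k::comm_ring_1 \<Rightarrow> 'h::ring_1 \<Rightarrow> 'h) \<Rightarrow> ('h \<Rightarrow> ('h \<times> 'h) list)
    \<Rightarrow> ('h list \<Rightarrow> 'k) \<Rightarrow> nat \<Rightarrow> nat \<Rightarrow> ('h list \<Rightarrow> 'k) \<Rightarrow> 'h list \<Rightarrow> 'k" where
  "compH sH \<Delta> f i n g = (\<lambda>as. f (take (i - 1) as @
      [sum_list [sH (g vs) (prod_list us). (us, vs) \<leftarrow> sweedler \<Delta> (take n (drop (i - 1) as))]]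
      @ drop (i - 1 + n) as))"

text \<open>Partial composition \<open>f \<circ>\<^sub>i g\<close> in \<open>End(A)\<close> (g of arity n, i counted from 1).\<close>
definition compE :: "('a list \<Rightarrow> 'a) \<Rightarrow> nat \<Rightarrow> nat \<Rightarrow> ('a list \<Rightarrow> 'a) \<Rightarrow> 'a list \<Rightarrow> 'a" where
  "compE f i n g = (\<lambda>as. f (take (i - 1) as @ [g (take n (drop (i - 1) as))] @ drop (i - 1 + n) as))"

definition PhiMap :: "('k \<Rightarrow> 'a::{monoid_mult, monoid_add} \<Rightarrow> 'a) \<Rightarrow> ('a \<Rightarrow> ('a \<times> 'h) list) \<Rightarrow> ('h list \<Rightarrow> 'k)
    \<Rightarrow> 'a list \<Rightarrow> 'a" where
  "PhiMap sA \<rho> f = (\<lambda>as. sum_list [sA (f hs) (prod_list xs). (xs, hs) \<leftarrow> sweedler \<rho> as])"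

definition sgnv :: "int \<Rightarrow> 'v::ab_group_add \<Rightarrow> 'v" where
  "sgnv k v = (if even k then v else - v)"

type_synonym ('x, 'v) pcomp = "('x list \<Rightarrow> 'v) \<Rightarrow> nat \<Rightarrow> nat \<Rightarrow> ('x list \<Rightarrow> 'v) \<Rightarrow> 'x list \<Rightarrow> 'v"

definition cobd :: "('x, 'v::ab_group_add) pcomp \<Rightarrow> ('x list \<Rightarrow> 'v) \<Rightarrow> nat \<Rightarrow> ('x list \<Rightarrow> 'v) \<Rightarrow> 'x list \<Rightarrow> 'v" where
  "cobd cmp mu n f = (\<lambda>xs. cmp mu 2 n f xs + (\<Sum>i = 1..n. sgnv (int i) (cmp f i 2 mu xs))
                            + sgnv (int n + 1) (cmp mu 1 n f xs))"

definition cupp :: "('x, 'v) pcomp \<Rightarrow> ('x list \<Rightarrow> 'v) \<Rightarrow> ('x list \<Rightarrow> 'v) \<Rightarrow> nat \<Rightarrow> ('x list \<Rightarrow> 'v) \<Rightarrow> nat \<Rightarrow> 'x list \<Rightarrow> 'v" where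
  "cupp cmp mu f m g n = cmp (cmp mu 1 m f) (m + 1) n g"

definition circbar :: "('x, 'v::ab_group_add) pcomp \<Rightarrow> ('x list \<Rightarrow> 'v) \<Rightarrow> nat \<Rightarrow> ('x list \<Rightarrow> 'v) \<Rightarrow> nat \<Rightarrow> 'x list \<Rightarrow> 'v" where
  "circbar cmp f m g n = (\<lambda>xs. sgnv ((int m - 1) * (int n - 1))
      (\<Sum>i = 1..m. sgnv ((int n - 1) * (int i - 1)) (cmp f i n g xs)))"

definition gbracket :: "('x, 'v::ab_group_add) pcomp \<Rightarrow> ('x list \<Rightarrow> 'v) \<Rightarrow> nat \<Rightarrow> ('x list \<Rightarrow> 'v) \<Rightarrow> nat \<Rightarrow> 'x list \<Rightarrow> 'v" where
  "gbracket cmp f m g n = (\<lambda>xs. circbar cmp f m g n xs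
      - sgnv ((int m - 1) * (int n - 1)) (circbar cmp g n f m xs))"

end

theory Submission
  imports Defs
begin


definition compatAH :: "('k::comm_ring_1 \<Rightarrow> 'a::ab_group_add \<Rightarrow> 'a) \<Rightarrow> ('k \<Rightarrow> 'h::ab_group_add \<Rightarrow> 'h)
   \<Rightarrow> ('k \<Rightarrow> 'v::ab_group_add \<Rightarrow> 'v) \<Rightarrow> ('a \<times> 'h list \<Rightarrow> 'v) \<Rightarrow> bool" where
 "compatAH sA sH sV B \<longleftrightarrow> (\<forall>x y hs. B (x+y,hs) = B(x,hs) + B(y,hs))
    \<and> (\<forall>c x hs. B(sA c x, hs) = sV c (B(x,hs)))
    \<and> (\<forall>a us x y vs. B(a, us@[x+y]@vs) = B(a,us@[x]@vs) + B(a,us@[y]@vs))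
    \<and> (\<forall>a us c x vs. B(a, us@[sH c x]@vs) = sV c (B(a, us@[x]@vs)))"

definition compatH :: "('k::comm_ring_1 \<Rightarrow> 'h::ab_group_add \<Rightarrow> 'h)
   \<Rightarrow> ('k \<Rightarrow> 'v::ab_group_add \<Rightarrow> 'v) \<Rightarrow> ('h list \<Rightarrow> 'v) \<Rightarrow> bool" where
 "compatH sH sV B \<longleftrightarrow> (\<forall>us x y vs. B(us@[x+y]@vs) = B(us@[x]@vs) + B(us@[y]@vs))
    \<and> (\<forall>us c x vs. B(us@[sH c x]@vs) = sV c (B(us@[x]@vs)))"

lemma sum_dlt:
  assumes "module sV" "finite S" "p \<in> S"
  shows "(\<Sum>g\<in>S. sV (dlt p g) (B g)) = B p"
proof -
  interpret module sV by fact
  have "(\<Sum>g\<in>S. sV (dlt p g) (B g)) = (\<Sum>g\<in>S. if p = g then B g else 0)"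
    by (rule sum.cong) (auto simp: dlt_def)
  also have "\<dots> = B p" using assms(2,3) by simp
  finally show ?thesis .
qed

lemma sum_count_list:
  assumes "module sV" "finite S" "set xs \<subseteq> S"
  shows "(\<Sum>g\<in>S. sV (of_nat (count_list xs g)) (B g)) = sum_list (map B xs)"
  using assms(3)
proof (induction xs)
  case Nil
  then show ?case using assms(1) by (simp add: module.scale_zero_left)
next
  case (Cons x xs)
  interpret module sV by fact
  have "(\<Sum>g\<in>S. sV (of_nat (count_list (x#xs) g)) (B g))
     = (\<Sum>g\<in>S. sV (dlt x g) (B g) + sV (of_nat (count_list xs g)) (B g))"
    by (rule sum.cong) (auto simp: dlt_def scale_left_distrib[symmetric] add.commute)
  also have "\<dots> = B x + sum_list (map B xs)"
    using Cons sum_dlt[OF assms(1,2)] by (simp add: sum.distrib)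
  finally show ?case by simp
qed

lemma gen3:
  assumes "module sV" "finite S'" "p \<in> S'" "q \<in> S'" "r \<in> S'" "B p = B q + B r"
  shows "(\<Sum>g\<in>S'. sV (dlt p g - dlt q g - dlt r g) (B g)) = 0"
proof -
  interpret module sV by fact
  have "(\<Sum>g\<in>S'. sV (dlt p g - dlt q g - dlt r g) (B g))
    = (\<Sum>g\<in>S'. sV (dlt p g) (B g)) - (\<Sum>g\<in>S'. sV (dlt q g) (B g)) - (\<Sum>g\<in>S'. sV (dlt r g) (B g))"
    by (simp add: scale_left_diff_distrib sum_subtractf)
  also have "\<dots> = 0" using sum_dlt[OF assms(1,2)] assms(3-6) by simp
  finally show ?thesis .
qed

lemma gen2:
  assumes "module sV" "finite S'" "p \<in> S'" "q \<in> S'" "B p = sV c (B q)"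
  shows "(\<Sum>g\<in>S'. sV (dlt p g - c * dlt q g) (B g)) = 0"
proof -
  interpret module sV by fact
  have "(\<Sum>g\<in>S'. sV (dlt p g - c * dlt q g) (B g))
    = (\<Sum>g\<in>S'. sV (dlt p g) (B g)) - sV c (\<Sum>g\<in>S'. sV (dlt q g) (B g))"
    by (simp add: scale_left_diff_distrib sum_subtractf scale_sum_right scale_scale[symmetric] del: scale_scale)
  also have "\<dots> = 0" using sum_dlt[OF assms(1,2)] assms(3-5) by simp
  finally show ?thesis .
qed

lemma tspanAH_eval:
  assumes "module sV" "compatAH sA sH sV B" "tspanAH sA sH v"
  shows "\<exists>S. finite S \<and> (\<forall>S'. finite S' \<longrightarrow> S \<subseteq> S' \<longrightarrow> (\<Sum>g\<in>S'. sV (v g) (B g)) = 0)"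
  using assms(3)
proof (induction rule: tspanAH.induct)
  interpret module sV by fact
  case zero
  then show ?case by (intro exI[of _ "{}"]) simp
next
  interpret module sV by fact
  case (add v w)
  then obtain S1 S2 where S: "finite S1" "\<forall>S'. finite S' \<longrightarrow> S1 \<subseteq> S' \<longrightarrow> (\<Sum>g\<in>S'. sV (v g) (B g)) = 0"
     "finite S2" "\<forall>S'. finite S' \<longrightarrow> S2 \<subseteq> S' \<longrightarrow> (\<Sum>g\<in>S'. sV (w g) (B g)) = 0" by blast
  show ?case
    by (rule exI[of _ "S1 \<union> S2"]) (use S in \<open>auto simp: scale_left_distrib sum.distrib\<close>)
next
  interpret module sV by fact
  case (smult v c)
  then obtain S1 where S: "finite S1" "\<forall>S'. finite S' \<longrightarrow> S1 \<subseteq> S' \<longrightarrow> (\<Sum>g\<in>S'. sV (v g) (B g)) = 0" by blast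
  show ?case
    by (rule exI[of _ "S1"]) (use S in \<open>auto simp: scale_scale[symmetric] scale_sum_right[symmetric] simp del: scale_scale\<close>)
next
  interpret module sV by fact
  case (addA x y hs)
  show ?case
    apply (rule exI[of _ "{(x+y,hs),(x,hs),(y,hs)}"])
    apply (intro conjI allI impI)
     apply simp
    apply (rule gen3[OF assms(1)]) using assms(2) by (auto simp: compatAH_def)
next
  interpret module sV by fact
  case (smA c x hs)
  show ?case
    apply (rule exI[of _ "{(sA c x,hs),(x,hs)}"])
    apply (intro conjI allI impI)
     apply simp
    apply (rule gen2[OF assms(1)]) using assms(2) by (auto simp: compatAH_def)
next
  interpret module sV by fact
  case (addH a us x y vs)
  show ?case
    apply (rule exI[of _ "{(a, us @ [x + y] @ vs),(a, us @ [x] @ vs),(a, us @ [y] @ vs)}"])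
    apply (intro conjI allI impI)
     apply simp
    apply (rule gen3[OF assms(1)]) using assms(2) by (auto simp: compatAH_def)
next
  interpret module sV by fact
  case (smH a us c x vs)
  show ?case
    apply (rule exI[of _ "{(a, us @ [sH c x] @ vs),(a, us @ [x] @ vs)}"])
    apply (intro conjI allI impI)
     apply simp
    apply (rule gen2[OF assms(1)]) using assms(2) by (auto simp: compatAH_def)
qed


lemma teqAH_eval:
  assumes "module sV" "compatAH sA sH sV B" "teqAH sA sH xs ys"
  shows "sum_list (map B xs) = sum_list (map B ys)"
proof -
  interpret module sV by fact
  have tsp: "tspanAH sA sH (\<lambda>g. free_vec xs g - free_vec ys g)" using assms(3) unfolding teqAH_def .
  have ex: "\<exists>S. finite S \<and> (\<forall>S'. finite S' \<longrightarrow> S \<subseteq> S' \<longrightarrow> (\<Sum>g\<in>S'. sV (free_vec xs g - free_vec ys g) (B g)) = 0)"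
    by (rule tspanAH_eval[OF assms(1,2) tsp])
  then obtain S where S: "finite S" "\<forall>S'. finite S' \<longrightarrow> S \<subseteq> S' \<longrightarrow> (\<Sum>g\<in>S'. sV (free_vec xs g - free_vec ys g) (B g)) = 0"
    by blast
  let ?S = "S \<union> set xs \<union> set ys"
  have "(\<Sum>g\<in>?S. sV (free_vec xs g - free_vec ys g) (B g)) = 0"
    by (rule S(2)[rule_format]) (use S(1) in auto)
  then have "0 = (\<Sum>g\<in>?S. sV (free_vec xs g - free_vec ys g) (B g))" by simp
  also have "\<dots> = (\<Sum>g\<in>?S. sV (of_nat (count_list xs g)) (B g)) - (\<Sum>g\<in>?S. sV (of_nat (count_list ys g)) (B g))"
    unfolding sum_subtractf[symmetric]
    by (rule sum.cong) (simp_all only: free_vec_def scale_left_diff_distrib)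
  also have "\<dots> = sum_list (map B xs) - sum_list (map B ys)"
  proof -
    have fin: "finite ?S" using S(1) by simp
    have e1: "(\<Sum>g\<in>?S. sV (of_nat (count_list xs g)) (B g)) = sum_list (map B xs)"
      by (rule sum_count_list[OF assms(1) fin]) auto
    have e2: "(\<Sum>g\<in>?S. sV (of_nat (count_list ys g)) (B g)) = sum_list (map B ys)"
      by (rule sum_count_list[OF assms(1) fin]) auto
    show ?thesis by (simp only: e1 e2)
  qed
  finally show ?thesis by simp
qed

lemma tspanH_eval:
  assumes "module sV" "compatH sH sV B" "tspanH sH v"
  shows "\<exists>S. finite S \<and> (\<forall>S'. finite S' \<longrightarrow> S \<subseteq> S' \<longrightarrow> (\<Sum>g\<in>S'. sV (v g) (B g)) = 0)"
  using assms(3)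
proof (induction rule: tspanH.induct)
  interpret module sV by fact
  case zero
  then show ?case by (intro exI[of _ "{}"]) simp
next
  interpret module sV by fact
  case (add v w)
  then obtain S1 S2 where S: "finite S1" "\<forall>S'. finite S' \<longrightarrow> S1 \<subseteq> S' \<longrightarrow> (\<Sum>g\<in>S'. sV (v g) (B g)) = 0"
     "finite S2" "\<forall>S'. finite S' \<longrightarrow> S2 \<subseteq> S' \<longrightarrow> (\<Sum>g\<in>S'. sV (w g) (B g)) = 0" by blast
  show ?case
    by (rule exI[of _ "S1 \<union> S2"]) (use S in \<open>auto simp: scale_left_distrib sum.distrib\<close>)
next
  interpret module sV by fact
  case (smult v c)
  then obtain S1 where S: "finite S1" "\<forall>S'. finite S' \<longrightarrow> S1 \<subseteq> S' \<longrightarrow> (\<Sum>g\<in>S'. sV (v g) (B g)) = 0" by blast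
  show ?case
    by (rule exI[of _ "S1"]) (use S in \<open>auto simp: scale_scale[symmetric] scale_sum_right[symmetric] simp del: scale_scale\<close>)
next
  interpret module sV by fact
  case (addH us x y vs)
  show ?case
    apply (rule exI[of _ "{(us @ [x + y] @ vs),(us @ [x] @ vs),(us @ [y] @ vs)}"])
    apply (intro conjI allI impI)
     apply simp
    apply (rule gen3[OF assms(1)]) using assms(2) by (auto simp: compatH_def)
next
  interpret module sV by fact
  case (smH us c x vs)
  show ?case
    apply (rule exI[of _ "{(us @ [sH c x] @ vs),(us @ [x] @ vs)}"])
    apply (intro conjI allI impI)
     apply simp
    apply (rule gen2[OF assms(1)]) using assms(2) by (auto simp: compatH_def)
qed

lemma teqH_eval:
  assumes "module sV" "compatH sH sV B" "teqH sH xs ys"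
  shows "sum_list (map B xs) = sum_list (map B ys)"
proof -
  interpret module sV by fact
  have tsp: "tspanH sH (\<lambda>g. free_vec xs g - free_vec ys g)" using assms(3) unfolding teqH_def .
  have ex: "\<exists>S. finite S \<and> (\<forall>S'. finite S' \<longrightarrow> S \<subseteq> S' \<longrightarrow> (\<Sum>g\<in>S'. sV (free_vec xs g - free_vec ys g) (B g)) = 0)"
    by (rule tspanH_eval[OF assms(1,2) tsp])
  then obtain S where S: "finite S" "\<forall>S'. finite S' \<longrightarrow> S \<subseteq> S' \<longrightarrow> (\<Sum>g\<in>S'. sV (free_vec xs g - free_vec ys g) (B g)) = 0"
    by blast
  let ?S = "S \<union> set xs \<union> set ys"
  have "(\<Sum>g\<in>?S. sV (free_vec xs g - free_vec ys g) (B g)) = 0"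
    by (rule S(2)[rule_format]) (use S(1) in auto)
  then have "0 = (\<Sum>g\<in>?S. sV (free_vec xs g - free_vec ys g) (B g))" by simp
  also have "\<dots> = (\<Sum>g\<in>?S. sV (of_nat (count_list xs g)) (B g)) - (\<Sum>g\<in>?S. sV (of_nat (count_list ys g)) (B g))"
    unfolding sum_subtractf[symmetric]
    by (rule sum.cong) (simp_all only: free_vec_def scale_left_diff_distrib)
  also have "\<dots> = sum_list (map B xs) - sum_list (map B ys)"
  proof -
    have fin: "finite ?S" using S(1) by simp
    have e1: "(\<Sum>g\<in>?S. sV (of_nat (count_list xs g)) (B g)) = sum_list (map B xs)"
      by (rule sum_count_list[OF assms(1) fin]) auto
    have e2: "(\<Sum>g\<in>?S. sV (of_nat (count_list ys g)) (B g)) = sum_list (map B ys)"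
      by (rule sum_count_list[OF assms(1) fin]) auto
    show ?thesis by (simp only: e1 e2)
  qed
  finally show ?thesis by simp
qed


definition psum :: "('x \<times> 'y) list \<Rightarrow> ('x \<Rightarrow> 'y \<Rightarrow> 'v::comm_monoid_add) \<Rightarrow> 'v" where
  "psum L F = sum_list (map (\<lambda>p. F (fst p) (snd p)) L)"

lemma psum_Nil[simp]: "psum [] F = 0" by (simp add: psum_def)
lemma psum_Cons[simp]: "psum ((a,b)#L) F = F a b + psum L F" by (simp add: psum_def)
lemma psum_append[simp]: "psum (L1@L2) F = psum L1 F + psum L2 F" by (simp add: psum_def)
lemma psum_cong: "(\<And>a b. (a,b) \<in> set L \<Longrightarrow> F a b = G a b) \<Longrightarrow> psum L F = psum L G"
  unfolding psum_def by (induction L) auto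
lemma psum_add: "psum L (\<lambda>a b. F a b + G a b) = psum L F + psum L G"
  unfolding psum_def by (induction L) (auto simp: algebra_simps)
lemma psum_zero[simp]: "psum L (\<lambda>a b. 0) = 0"
  unfolding psum_def by (induction L) auto
lemma psum_swap: "psum L1 (\<lambda>a b. psum L2 (\<lambda>c d. F a b c d)) = psum L2 (\<lambda>c d. psum L1 (\<lambda>a b. F a b c d))"
  by (induction L1) (auto simp: psum_add)
lemma psum_neg: "psum L (\<lambda>a b. - (F a b :: 'v::ab_group_add)) = - psum L F"
  unfolding psum_def by (induction L) auto
lemma psum_mult_left: "(c::'v::ring) * psum L F = psum L (\<lambda>a b. c * F a b)"
  unfolding psum_def by (induction L) (auto simp: algebra_simps)
lemma psum_mult_right: "psum L F * (c::'v::ring) = psum L (\<lambda>a b. F a b * c)"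
  unfolding psum_def by (induction L) (auto simp: algebra_simps)
lemma psum_module: "module s \<Longrightarrow> s c (psum L F) = psum L (\<lambda>a b. s c (F a b))"
  unfolding psum_def by (induction L) (auto simp: module.scale_right_distrib module.scale_zero_right)
lemma psum_module_left: "module s \<Longrightarrow> s (psum L F) x = psum L (\<lambda>a b. s (F a b) x)"
  unfolding psum_def by (induction L) (auto simp: module.scale_left_distrib module.scale_zero_left)
lemma psum_additive: "(\<And>x y. f (x + y) = f x + f y) \<Longrightarrow> f 0 = 0 \<Longrightarrow> f (psum L F) = psum L (\<lambda>a b. f (F a b))"
  unfolding psum_def by (induction L) auto

lemma psum_sw_Nil[simp]: "psum (sweedler D []) F = F [] []" by (simp add: psum_def)

lemma psum_concat_map: "psum (concat (map G L)) F = sum_list (map (\<lambda>x. psum (G x) F) L)"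
  by (induction L) auto

lemma psum_sw_cons: "psum (sweedler D (x#xs)) F = psum (D x) (\<lambda>y z. psum (sweedler D xs) (\<lambda>ys zs. F (y#ys) (z#zs)))"
proof -
  have "\<And>L M. psum (concat (map (\<lambda>(y, z). map (\<lambda>(ys, zs). (y # ys, z # zs)) M) L)) F
     = psum L (\<lambda>y z. psum M (\<lambda>ys zs. F (y#ys) (z#zs)))"
  proof -
    fix L M
    have inner: "\<And>y z. psum (map (\<lambda>(ys, zs). (y # ys, z # zs)) M) F = psum M (\<lambda>ys zs. F (y#ys) (z#zs))"
      by (induction M) auto
    show "psum (concat (map (\<lambda>(y, z). map (\<lambda>(ys, zs). (y # ys, z # zs)) M) L)) F
     = psum L (\<lambda>y z. psum M (\<lambda>ys zs. F (y#ys) (z#zs)))"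
      by (induction L) (auto simp: inner)
  qed
  then show ?thesis by simp
qed

lemma sw_length: "(a,b) \<in> set (sweedler D xs) \<Longrightarrow> length a = length xs \<and> length b = length xs"
  by (induction xs arbitrary: a b) auto

lemma psum_sw_append: "psum (sweedler D (xs@ys)) F = psum (sweedler D xs) (\<lambda>a b. psum (sweedler D ys) (\<lambda>c d. F (a@c) (b@d)))"
proof (induction xs arbitrary: F)
  case Nil
  then show ?case by simp
next
  case (Cons x xs)
  show ?case
    by (simp only: append_Cons psum_sw_cons Cons.IH append.simps)
qed


locale setting =
  fixes sH :: "'k::comm_ring_1 \<Rightarrow> 'h::ring_1 \<Rightarrow> 'h"
    and sA :: "'k \<Rightarrow> 'a::ring_1 \<Rightarrow> 'a"
    and \<Delta> :: "'h \<Rightarrow> ('h \<times> 'h) list"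
    and \<epsilon> :: "'h \<Rightarrow> 'k"
    and \<rho> :: "'a \<Rightarrow> ('a \<times> 'h) list"
  assumes bi: "bialgebra sH \<Delta> \<epsilon>" and co: "comodule_algebra sA sH \<Delta> \<epsilon> \<rho>"
begin

lemma modA: "module sA" using co by (simp add: comodule_algebra_def k_algebra_def)
lemma modH: "module sH" using bi by (simp add: bialgebra_def k_algebra_def)
lemma kA1: "sA c (x * y) = sA c x * y" using co unfolding comodule_algebra_def k_algebra_def by blast
lemma kA2: "sA c (x * y) = x * sA c y" using co unfolding comodule_algebra_def k_algebra_def by blast
lemma kH1: "sH c (x * y) = sH c x * y" using bi unfolding bialgebra_def k_algebra_def by blast
lemma kH2: "sH c (x * y) = x * sH c y" using bi unfolding bialgebra_def k_algebra_def by blast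
lemma eps_add: "\<epsilon> (x + y) = \<epsilon> x + \<epsilon> y" using bi by (simp add: bialgebra_def)
lemma eps_sm: "\<epsilon> (sH c x) = c * \<epsilon> x" using bi by (simp add: bialgebra_def)
lemma co_add: "teqAH sA sH [(a, [h]). (a, h) \<leftarrow> \<rho> (x + y)] [(a, [h]). (a, h) \<leftarrow> \<rho> x @ \<rho> y]"
  using co by (simp add: comodule_algebra_def)
lemma co_sm: "teqAH sA sH [(a, [h]). (a, h) \<leftarrow> \<rho> (sA c x)] [(sA c a, [h]). (a, h) \<leftarrow> \<rho> x]"
  using co by (simp add: comodule_algebra_def)
lemma co_coassoc: "teqAH sA sH [(a', [h', h]). (a, h) \<leftarrow> \<rho> x, (a', h') \<leftarrow> \<rho> a]
                      [(a, [h1, h2]). (a, h) \<leftarrow> \<rho> x, (h1, h2) \<leftarrow> \<Delta> h]"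
  using co by (simp add: comodule_algebra_def)
lemma co_counit: "sum_list [sA (\<epsilon> h) a. (a, h) \<leftarrow> \<rho> x] = x"
  using co by (simp add: comodule_algebra_def)
lemma co_mult: "teqAH sA sH [(a, [h]). (a, h) \<leftarrow> \<rho> (x * y)] [(a * b, [h * k]). (a, h) \<leftarrow> \<rho> x, (b, k) \<leftarrow> \<rho> y]"
  using co by (simp add: comodule_algebra_def)
lemma co_one: "teqAH sA sH [(a, [h]). (a, h) \<leftarrow> \<rho> 1] [(1, [1])]"
  using co by (simp add: comodule_algebra_def)

definition bil :: "('a \<Rightarrow> 'h \<Rightarrow> 'a) \<Rightarrow> bool" where
  "bil B \<longleftrightarrow> (\<forall>a a' h. B (a + a') h = B a h + B a' h) \<and> (\<forall>c a h. B (sA c a) h = sA c (B a h))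
     \<and> (\<forall>a h h'. B a (h + h') = B a h + B a h') \<and> (\<forall>a c h. B a (sH c h) = sA c (B a h))"

lemma length1: "length (us @ [x] @ vs) = Suc 0 \<longleftrightarrow> us = [] \<and> vs = []" by auto

lemma bil_compat:
  assumes "bil B"
  shows "compatAH sA sH sA (\<lambda>(a, hs). if length hs = 1 then B a (hd hs) else 0)"
  using assms modA unfolding compatAH_def bil_def
  by (auto simp: length1 module.scale_zero_right)

lemma map_single: "sum_list (map (\<lambda>(a, hs). if length hs = 1 then B a (hd hs) else 0) [(a, [h]). (a, h) \<leftarrow> L])
   = psum L B"
  by (induction L) auto

lemma rho_teq:
  assumes "teqAH sA sH [(a, [h]). (a, h) \<leftarrow> L1] [(a, [h]). (a, h) \<leftarrow> L2]" "bil B"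
  shows "psum L1 B = psum L2 B"
  using teqAH_eval[OF modA bil_compat[OF assms(2)] assms(1)] by (simp only: map_single)

lemma R1: "bil B \<Longrightarrow> psum (\<rho> (x + y)) B = psum (\<rho> x) B + psum (\<rho> y) B"
  using rho_teq[OF co_add] by simp

lemma map_single_sm: "[(sA c a, [h]). (a, h) \<leftarrow> L] = [(a, [h]). (a, h) \<leftarrow> map (\<lambda>(a,h). (sA c a, h)) L]"
  by (induction L) auto

lemma psum_map_sm: "psum (map (\<lambda>(a,h). (sA c a, h)) L) B = psum L (\<lambda>a h. B (sA c a) h)"
  by (induction L) auto

lemma R2: "bil B \<Longrightarrow> psum (\<rho> (sA c x)) B = sA c (psum (\<rho> x) B)"
proof -
  assume b: "bil B"
  have "psum (\<rho> (sA c x)) B = psum (map (\<lambda>(a,h). (sA c a, h)) (\<rho> x)) B"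
    using rho_teq[OF co_sm[unfolded map_single_sm] b] .
  also have "\<dots> = psum (\<rho> x) (\<lambda>a h. sA c (B a h))"
    using b by (simp add: psum_map_sm bil_def)
  also have "\<dots> = sA c (psum (\<rho> x) B)" by (simp add: psum_module[OF modA])
  finally show ?thesis .
qed

lemma R0: "bil B \<Longrightarrow> psum (\<rho> 0) B = 0"
  using R2[of B 0 0] modA by (simp add: module.scale_zero_left)

lemma Rsum: "bil B \<Longrightarrow> psum (\<rho> (sum_list (map f L))) B = sum_list (map (\<lambda>i. psum (\<rho> (f i)) B) L)"
  by (induction L) (auto simp: R0 R1)

lemma Rpsum: "bil B \<Longrightarrow> psum (\<rho> (psum L F)) B = psum L (\<lambda>a b. psum (\<rho> (F a b)) B)"
  by (induction L) (auto simp: R0 R1)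


lemma map_prod_comp: "[(a * b, [h * k]). (a, h) \<leftarrow> L, (b, k) \<leftarrow> M] = [(a, [h]). (a, h) \<leftarrow> concat (map (\<lambda>(a,h). map (\<lambda>(b,k). (a*b, h*k)) M) L)]"
  by (induction L) auto

lemma psum_prod_comp: "psum (concat (map (\<lambda>(a,h). map (\<lambda>(b,k). (a*b, h*k)) M) L)) B = psum L (\<lambda>a h. psum M (\<lambda>b k. B (a*b) (h*k)))"
proof -
  have i: "\<And>a h. psum (map (\<lambda>(b,k). (a*b, h*k)) M) B = psum M (\<lambda>b k. B (a*b) (h*k))"
    by (induction M) auto
  show ?thesis by (induction L) (auto simp: i)
qed

lemma R3: "bil B \<Longrightarrow> psum (\<rho> (x * y)) B = psum (\<rho> x) (\<lambda>a h. psum (\<rho> y) (\<lambda>b k. B (a*b) (h*k)))"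
  using rho_teq[OF co_mult[unfolded map_prod_comp]] by (simp add: psum_prod_comp)

lemma R4: "bil B \<Longrightarrow> psum (\<rho> 1) B = B 1 1"
proof -
  assume b: "bil B"
  have "teqAH sA sH [(a, [h]). (a, h) \<leftarrow> \<rho> 1] [(a, [h]). (a, h) \<leftarrow> [(1::'a,1::'h)]]"
    using co_one by simp
  from rho_teq[OF this b] show ?thesis by simp
qed

lemma bil_shift:
  assumes "bil B" shows "bil (\<lambda>b k. B (a*b) (h*k))"
  using assms unfolding bil_def by (auto simp: distrib_left kA2[symmetric] kH2[symmetric])

lemma Rprod: "bil B \<Longrightarrow> psum (\<rho> (prod_list xs)) B = psum (sweedler \<rho> xs) (\<lambda>ys ks. B (prod_list ys) (prod_list ks))"
proof (induction xs arbitrary: B)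
  case Nil
  then show ?case by (simp add: R4)
next
  case (Cons x xs)
  have "psum (\<rho> (prod_list (x#xs))) B = psum (\<rho> x) (\<lambda>a h. psum (\<rho> (prod_list xs)) (\<lambda>b k. B (a*b) (h*k)))"
    using R3[OF Cons.prems] by simp
  also have "\<dots> = psum (\<rho> x) (\<lambda>a h. psum (sweedler \<rho> xs) (\<lambda>ys ks. B (a * prod_list ys) (h * prod_list ks)))"
    by (rule psum_cong) (simp add: Cons.IH[OF bil_shift[OF Cons.prems]])
  also have "\<dots> = psum (sweedler \<rho> (x#xs)) (\<lambda>ys ks. B (prod_list ys) (prod_list ks))"
    by (subst psum_sw_cons) simp
  finally show ?case .
qed

lemma counit: "psum (\<rho> x) (\<lambda>a h. sA (\<epsilon> h) a) = x"
proof -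
  have "\<And>L. psum L (\<lambda>a h. sA (\<epsilon> h) a) = sum_list [sA (\<epsilon> h) a. (a, h) \<leftarrow> L]"
    subgoal for L by (induction L) auto done
  then show ?thesis using co_counit by simp
qed

definition tril :: "('a \<Rightarrow> 'h \<Rightarrow> 'h \<Rightarrow> 'a) \<Rightarrow> bool" where
  "tril B \<longleftrightarrow> (\<forall>a a' h k. B (a + a') h k = B a h k + B a' h k) \<and> (\<forall>c a h k. B (sA c a) h k = sA c (B a h k))
     \<and> (\<forall>a h h' k. B a (h + h') k = B a h k + B a h' k) \<and> (\<forall>a c h k. B a (sH c h) k = sA c (B a h k))
     \<and> (\<forall>a h k k'. B a h (k + k') = B a h k + B a h k') \<and> (\<forall>a c h k. B a h (sH c k) = sA c (B a h k))"

lemma length2: "length (us @ [x] @ vs) = 2 \<longleftrightarrow> (us = [] \<and> length vs = 1) \<or> (length us = 1 \<and> vs = [])"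
  by (cases us) auto

lemma tril_compat:
  assumes "tril B"
  shows "compatAH sA sH sA (\<lambda>(a, hs). if length hs = 2 then B a (hs!0) (hs!1) else 0)"
proof -
  have l1: "length l = Suc 0 \<longleftrightarrow> (\<exists>z. l = [z])" for l :: "'h list" by (cases l) auto
  show ?thesis
  using assms modA unfolding compatAH_def tril_def
  apply (intro conjI allI)
     apply (auto simp: module.scale_zero_right)[2]
  apply (auto simp: length2 l1 module.scale_zero_right nth_append)
  apply (case_tac us; auto)+
  done
qed

lemma map_coassoc1: "sum_list (map (\<lambda>(a, hs). if length hs = 2 then B a (hs!0) (hs!1) else 0)
      [(a', [h', h]). (a, h) \<leftarrow> L, (a', h') \<leftarrow> \<rho> a]) = psum L (\<lambda>a h. psum (\<rho> a) (\<lambda>a' h'. B a' h' h))"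
proof -
  have i: "\<And>M h. sum_list (map (\<lambda>(a, hs). if length hs = 2 then B a (hs!0) (hs!1) else 0)
      (map (\<lambda>(a', h'). (a', [h', h])) M)) = psum M (\<lambda>a' h'. B a' h' h)"
    subgoal for M h by (induction M) auto done
  show ?thesis
  proof (induction L)
    case (Cons p L)
    then show ?case by (cases p) (simp add: i del: map_map)
  qed simp
qed

lemma map_coassoc2: "sum_list (map (\<lambda>(a, hs). if length hs = 2 then B a (hs!0) (hs!1) else 0)
      [(a, [h1, h2]). (a, h) \<leftarrow> L, (h1, h2) \<leftarrow> \<Delta> h]) = psum L (\<lambda>a h. psum (\<Delta> h) (\<lambda>h1 h2. B a h1 h2))"
proof -
  have i: "\<And>M a. sum_list (map (\<lambda>(a, hs). if length hs = 2 then B a (hs!0) (hs!1) else 0)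
      (map (\<lambda>(h1, h2). (a, [h1, h2])) M)) = psum M (\<lambda>h1 h2. B a h1 h2)"
    subgoal for M a by (induction M) auto done
  show ?thesis
  proof (induction L)
    case (Cons p L)
    then show ?case by (cases p) (simp add: i del: map_map)
  qed simp
qed

lemma coassoc: "tril B \<Longrightarrow> psum (\<rho> x) (\<lambda>a h. psum (\<rho> a) (\<lambda>a' h'. B a' h' h)) = psum (\<rho> x) (\<lambda>a h. psum (\<Delta> h) (\<lambda>h1 h2. B a h1 h2))"
  using teqAH_eval[OF modA tril_compat co_coassoc] by (simp only: map_coassoc1 map_coassoc2)

end


context setting
begin

definition linD :: "nat \<Rightarrow> ('a \<Rightarrow> 'h \<Rightarrow> 'h list \<Rightarrow> 'a) \<Rightarrow> bool" where
  "linD N D \<longleftrightarrow> (\<forall>X Y U vs. D (X + Y) U vs = D X U vs + D Y U vs)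
    \<and> (\<forall>c X U vs. D (sA c X) U vs = sA c (D X U vs))
    \<and> (\<forall>X U U' vs. D X (U + U') vs = D X U vs + D X U' vs)
    \<and> (\<forall>X c U vs. D X (sH c U) vs = sA c (D X U vs))
    \<and> (\<forall>X U us x y ws. length us + length ws + 1 = N \<longrightarrow> D X U (us @ [x + y] @ ws) = D X U (us @ [x] @ ws) + D X U (us @ [y] @ ws))
    \<and> (\<forall>X U us c x ws. length us + length ws + 1 = N \<longrightarrow> D X U (us @ [sH c x] @ ws) = sA c (D X U (us @ [x] @ ws)))"

lemma linD_shift:
  assumes "linD (Suc N) D"
  shows "linD N (\<lambda>X U vs. D (a * X) (u * U) (v # vs))"
proof -
  note L = assms[unfolded linD_def]
  show ?thesis unfolding linD_def
  proof (intro conjI allI impI)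
    fix X Y U vs show "D (a * (X + Y)) (u * U) (v # vs) = D (a * X) (u * U) (v # vs) + D (a * Y) (u * U) (v # vs)"
      using L by (simp add: distrib_left)
  next
    fix c X U vs show "D (a * sA c X) (u * U) (v # vs) = sA c (D (a * X) (u * U) (v # vs))"
      using L by (simp add: kA2[symmetric])
  next
    fix X U U' vs show "D (a * X) (u * (U + U')) (v # vs) = D (a * X) (u * U) (v # vs) + D (a * X) (u * U') (v # vs)"
      using L by (simp add: distrib_left)
  next
    fix X c U vs show "D (a * X) (u * sH c U) (v # vs) = sA c (D (a * X) (u * U) (v # vs))"
      using L by (simp add: kH2[symmetric])
  next
    fix X :: 'a and U x y :: 'h and us ws :: "'h list" assume "length us + length ws + 1 = N"
    then show "D (a * X) (u * U) (v # us @ [x + y] @ ws) = D (a * X) (u * U) (v # us @ [x] @ ws) + D (a * X) (u * U) (v # us @ [y] @ ws)"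
      using L[THEN conjunct2, THEN conjunct2, THEN conjunct2, THEN conjunct2, THEN conjunct1, rule_format, of "v # us" ws "a*X" "u*U" x y]
      by simp
  next
    fix X :: 'a and U x :: 'h and c :: 'k and us ws :: "'h list" assume "length us + length ws + 1 = N"
    then show "D (a * X) (u * U) (v # us @ [sH c x] @ ws) = sA c (D (a * X) (u * U) (v # us @ [x] @ ws))"
      using L[THEN conjunct2, THEN conjunct2, THEN conjunct2, THEN conjunct2, THEN conjunct2, rule_format, of "v # us" ws "a*X" "u*U" c x]
      by simp
  qed
qed

lemma linD_tril:
  assumes "linD (Suc N) D" "length hm = N"
  shows "tril (\<lambda>a h1 h2. D (a * P) (h1 * K) (h2 # hm))"
proof -
  note L = assms(1)[unfolded linD_def]
  have e1: "D X U ((x + y) # hm) = D X U (x # hm) + D X U (y # hm)" for X U x y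
    using L[THEN conjunct2, THEN conjunct2, THEN conjunct2, THEN conjunct2, THEN conjunct1, rule_format, of "[]" hm X U x y] assms(2)
    by simp
  have e2: "D X U (sH c x # hm) = sA c (D X U (x # hm))" for X U c x
    using L[THEN conjunct2, THEN conjunct2, THEN conjunct2, THEN conjunct2, THEN conjunct2, rule_format, of "[]" hm X U c x] assms(2)
    by simp
  show ?thesis unfolding tril_def using L
    by (auto simp: distrib_right kA1[symmetric] kH1[symmetric] e1 e2)
qed

lemma coassoc_list:
  "linD (length M) D \<Longrightarrow>
   psum (sweedler \<rho> M) (\<lambda>xm hm. psum (sweedler \<Delta> hm) (\<lambda>us vs. D (prod_list xm) (prod_list us) vs))
 = psum (sweedler \<rho> M) (\<lambda>xm hm. psum (sweedler \<rho> xm) (\<lambda>ys ks. D (prod_list ys) (prod_list ks) hm))"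
proof (induction M arbitrary: D)
  case Nil
  then show ?case by simp
next
  case (Cons x M)
  have lin: "linD (Suc (length M)) D" using Cons.prems by simp
  let ?pM = "sweedler \<rho> M"
  have "psum (sweedler \<rho> (x#M)) (\<lambda>xm hm. psum (sweedler \<Delta> hm) (\<lambda>us vs. D (prod_list xm) (prod_list us) vs))
    = psum (\<rho> x) (\<lambda>a h. psum ?pM (\<lambda>xm hm. psum (\<Delta> h) (\<lambda>u v. psum (sweedler \<Delta> hm) (\<lambda>us vs. D (a * prod_list xm) (u * prod_list us) (v # vs)))))"
    by (simp add: psum_sw_cons del: sweedler.simps)
  also have "\<dots> = psum (\<rho> x) (\<lambda>a h. psum (\<Delta> h) (\<lambda>u v. psum ?pM (\<lambda>xm hm. psum (sweedler \<Delta> hm) (\<lambda>us vs. D (a * prod_list xm) (u * prod_list us) (v # vs)))))"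
    by (rule psum_cong) (rule psum_swap)
  also have "\<dots> = psum (\<rho> x) (\<lambda>a h. psum (\<Delta> h) (\<lambda>u v. psum ?pM (\<lambda>xm hm. psum (sweedler \<rho> xm) (\<lambda>ys ks. D (a * prod_list ys) (u * prod_list ks) (v # hm)))))"
  proof (rule psum_cong, rule psum_cong)
    fix a h u v
    show "psum ?pM (\<lambda>xm hm. psum (sweedler \<Delta> hm) (\<lambda>us vs. D (a * prod_list xm) (u * prod_list us) (v # vs)))
        = psum ?pM (\<lambda>xm hm. psum (sweedler \<rho> xm) (\<lambda>ys ks. D (a * prod_list ys) (u * prod_list ks) (v # hm)))"
      using Cons.IH[OF linD_shift[OF lin, of a u v]] by simp
  qed
  also have "\<dots> = psum (\<rho> x) (\<lambda>a h. psum ?pM (\<lambda>xm hm. psum (\<Delta> h) (\<lambda>u v. psum (sweedler \<rho> xm) (\<lambda>ys ks. D (a * prod_list ys) (u * prod_list ks) (v # hm)))))"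
    by (rule psum_cong) (rule psum_swap)
  also have "\<dots> = psum (\<rho> x) (\<lambda>a h. psum ?pM (\<lambda>xm hm. psum (sweedler \<rho> xm) (\<lambda>ys ks. psum (\<Delta> h) (\<lambda>u v. D (a * prod_list ys) (u * prod_list ks) (v # hm)))))"
    by (rule psum_cong, rule psum_cong) (rule psum_swap)
  also have "\<dots> = psum ?pM (\<lambda>xm hm. psum (\<rho> x) (\<lambda>a h. psum (sweedler \<rho> xm) (\<lambda>ys ks. psum (\<Delta> h) (\<lambda>u v. D (a * prod_list ys) (u * prod_list ks) (v # hm)))))"
    by (rule psum_swap)
  also have "\<dots> = psum ?pM (\<lambda>xm hm. psum (sweedler \<rho> xm) (\<lambda>ys ks. psum (\<rho> x) (\<lambda>a h. psum (\<Delta> h) (\<lambda>u v. D (a * prod_list ys) (u * prod_list ks) (v # hm)))))"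
    by (rule psum_cong) (rule psum_swap)
  also have "\<dots> = psum ?pM (\<lambda>xm hm. psum (sweedler \<rho> xm) (\<lambda>ys ks. psum (\<rho> x) (\<lambda>a h. psum (\<rho> a) (\<lambda>a' h'. D (a' * prod_list ys) (h' * prod_list ks) (h # hm)))))"
  proof (rule psum_cong, rule psum_cong)
    fix xm hm ys ks assume "(xm, hm) \<in> set ?pM"
    then have "length hm = length M" using sw_length by blast
    from coassoc[OF linD_tril[OF lin this, of "prod_list ys" "prod_list ks"], of x]
    show "psum (\<rho> x) (\<lambda>a h. psum (\<Delta> h) (\<lambda>u v. D (a * prod_list ys) (u * prod_list ks) (v # hm)))
       = psum (\<rho> x) (\<lambda>a h. psum (\<rho> a) (\<lambda>a' h'. D (a' * prod_list ys) (h' * prod_list ks) (h # hm)))"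
      by simp
  qed
  also have "\<dots> = psum ?pM (\<lambda>xm hm. psum (\<rho> x) (\<lambda>a h. psum (sweedler \<rho> xm) (\<lambda>ys ks. psum (\<rho> a) (\<lambda>a' h'. D (a' * prod_list ys) (h' * prod_list ks) (h # hm)))))"
    by (rule psum_cong) (rule psum_swap)
  also have "\<dots> = psum (\<rho> x) (\<lambda>a h. psum ?pM (\<lambda>xm hm. psum (sweedler \<rho> xm) (\<lambda>ys ks. psum (\<rho> a) (\<lambda>a' h'. D (a' * prod_list ys) (h' * prod_list ks) (h # hm)))))"
    by (rule psum_swap)
  also have "\<dots> = psum (\<rho> x) (\<lambda>a h. psum ?pM (\<lambda>xm hm. psum (\<rho> a) (\<lambda>a' h'. psum (sweedler \<rho> xm) (\<lambda>ys ks. D (a' * prod_list ys) (h' * prod_list ks) (h # hm)))))"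
    by (rule psum_cong, rule psum_cong) (rule psum_swap)
  also have "\<dots> = psum (sweedler \<rho> (x#M)) (\<lambda>xm hm. psum (sweedler \<rho> xm) (\<lambda>ys ks. D (prod_list ys) (prod_list ks) hm))"
    by (simp add: psum_sw_cons del: sweedler.simps)
  finally show ?case .
qed

end


lemma sum_list_comp_psum: "sum_list [F a b. (a, b) \<leftarrow> L] = psum L F"
  by (induction L) auto

lemma Phi_psum: "PhiMap sA \<rho> f as = psum (sweedler \<rho> as) (\<lambda>xs hs. sA (f hs) (prod_list xs))"
  unfolding PhiMap_def by (rule sum_list_comp_psum)

lemma compH_psum: "compH sH \<Delta> f i n g as = f (take (i - 1) as @
      [psum (sweedler \<Delta> (take n (drop (i - 1) as))) (\<lambda>us vs. sH (g vs) (prod_list us))] @ drop (i - 1 + n) as)"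
  unfolding compH_def by (simp only: sum_list_comp_psum)

lemma psum_sw_single: "psum (sweedler D [z]) F = psum (D z) (\<lambda>y k. F [y] [k])"
  by (simp only: psum_sw_cons psum_sw_Nil)

context setting
begin

definition linat :: "nat \<Rightarrow> nat \<Rightarrow> ('h list \<Rightarrow> 'k) \<Rightarrow> bool" where
  "linat i m f \<longleftrightarrow> (\<forall>us vs x y. length us = i - 1 \<and> length vs = m - i \<longrightarrow> f (us @ [x + y] @ vs) = f (us @ [x] @ vs) + f (us @ [y] @ vs))
     \<and> (\<forall>us vs c x. length us = i - 1 \<and> length vs = m - i \<longrightarrow> f (us @ [sH c x] @ vs) = c * f (us @ [x] @ vs))"

lemma linat_psum:
  assumes "linat i m f" "length us = i - 1" "length vs = m - i"
  shows "f (us @ [psum L (\<lambda>a b. sH (c a b) (e a b))] @ vs) = psum L (\<lambda>a b. c a b * f (us @ [e a b] @ vs))"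
proof (induction L)
  case Nil
  have "f (us @ [sH 0 0] @ vs) = 0 * f (us @ [0] @ vs)" using assms unfolding linat_def by blast
  then show ?case using modH by (simp add: module.scale_zero_left)
next
  case (Cons p L)
  then show ?case using assms unfolding linat_def by (cases p) simp
qed

lemma comp_main:
  assumes f: "linat i m f" and g: "multilin sH (*) n g" and i: "1 \<le> i" "i \<le> m" and len: "length as = m + n - 1"
  shows "PhiMap sA \<rho> (compH sH \<Delta> f i n g) as = compE (PhiMap sA \<rho> f) i n (PhiMap sA \<rho> g) as"
proof -
  define P where "P = take (i - 1) as"
  define M where "M = take n (drop (i - 1) as)"
  define S where "S = drop (i - 1 + n) as"
  have asd: "as = P @ M @ S" unfolding P_def M_def S_def
    by (metis append_take_drop_id drop_drop add.commute)
  have lP: "length P = i - 1" and lM: "length M = n" and lS: "length S = m - i"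
    unfolding P_def M_def S_def using len i by auto
  let ?D = "\<lambda>xp hp xs hs X U vs. sA (g vs * f (hp @ [U] @ hs)) (prod_list xp * (X * prod_list xs))"
  have fa: "\<And>x y. f (hp @ (x + y) # hs) = f (hp @ x # hs) + f (hp @ y # hs)"
    and fs: "\<And>c x. f (hp @ sH c x # hs) = c * f (hp @ x # hs)"
    if "length hp = i - 1" "length hs = m - i" for hp hs
    using f that unfolding linat_def by auto
  have ga: "\<And>us ws x y. length us + length ws + 1 = length M \<Longrightarrow> g (us @ (x + y) # ws) = g (us @ x # ws) + g (us @ y # ws)"
    and gs: "\<And>us ws c x. length us + length ws + 1 = length M \<Longrightarrow> g (us @ sH c x # ws) = c * g (us @ x # ws)"
    using g lM unfolding multilin_def by auto
  interpret mA: module sA by (rule modA)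
  have linD: "linD (length M) (?D xp hp xs hs)" if "length hp = i - 1" "length hs = m - i" for xp hp xs hs
    unfolding linD_def
    by (auto simp: fa[OF that] fs[OF that] ga gs distrib_left distrib_right mA.scale_left_distrib mA.scale_right_distrib
        kA1[symmetric] kA2[symmetric] mult_ac)
  have bilB: "bil (\<lambda>y k. sA (f (hp @ [k] @ hs)) (prod_list xp * (y * prod_list xs)))" if "length hp = i - 1" "length hs = m - i" for xp hp xs hs
    unfolding bil_def
    by (auto simp: fa[OF that] fs[OF that] distrib_left distrib_right mA.scale_left_distrib mA.scale_right_distrib
        kA1[symmetric] kA2[symmetric] mult_ac)
  have LHS: "PhiMap sA \<rho> (compH sH \<Delta> f i n g) as
     = psum (sweedler \<rho> P) (\<lambda>xp hp. psum (sweedler \<rho> S) (\<lambda>xs hs.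
         psum (sweedler \<rho> M) (\<lambda>xm hm. psum (sweedler \<Delta> hm) (\<lambda>us vs. ?D xp hp xs hs (prod_list xm) (prod_list us) vs))))"
  proof -
    have "PhiMap sA \<rho> (compH sH \<Delta> f i n g) as = psum (sweedler \<rho> P) (\<lambda>xp hp. psum (sweedler \<rho> M) (\<lambda>xm hm. psum (sweedler \<rho> S) (\<lambda>xs hs.
         sA (compH sH \<Delta> f i n g (hp @ hm @ hs)) (prod_list (xp @ xm @ xs)))))"
      unfolding Phi_psum asd by (simp only: psum_sw_append append_assoc)
    also have "\<dots> = psum (sweedler \<rho> P) (\<lambda>xp hp. psum (sweedler \<rho> M) (\<lambda>xm hm. psum (sweedler \<rho> S) (\<lambda>xs hs.
         psum (sweedler \<Delta> hm) (\<lambda>us vs. ?D xp hp xs hs (prod_list xm) (prod_list us) vs))))"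
    proof (rule psum_cong, rule psum_cong, rule psum_cong)
      fix xp hp xm hm xs hs assume m: "(xp, hp) \<in> set (sweedler \<rho> P)" "(xm, hm) \<in> set (sweedler \<rho> M)" "(xs, hs) \<in> set (sweedler \<rho> S)"
      then have l: "length hp = i - 1" "length hm = n" "length hs = m - i" using sw_length lP lM lS by metis+
      have c: "compH sH \<Delta> f i n g (hp @ hm @ hs) = f (hp @ [psum (sweedler \<Delta> hm) (\<lambda>us vs. sH (g vs) (prod_list us))] @ hs)"
        unfolding compH_psum using l by simp
      show "sA (compH sH \<Delta> f i n g (hp @ hm @ hs)) (prod_list (xp @ xm @ xs)) =
         psum (sweedler \<Delta> hm) (\<lambda>us vs. ?D xp hp xs hs (prod_list xm) (prod_list us) vs)"
        unfolding c linat_psum[OF f l(1,3)] psum_module_left[OF modA] by (simp add: mult.assoc)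
    qed
    also have "\<dots> = psum (sweedler \<rho> P) (\<lambda>xp hp. psum (sweedler \<rho> S) (\<lambda>xs hs.
         psum (sweedler \<rho> M) (\<lambda>xm hm. psum (sweedler \<Delta> hm) (\<lambda>us vs. ?D xp hp xs hs (prod_list xm) (prod_list us) vs))))"
      by (rule psum_cong) (rule psum_swap)
    finally show ?thesis .
  qed
  have RHS: "compE (PhiMap sA \<rho> f) i n (PhiMap sA \<rho> g) as
     = psum (sweedler \<rho> P) (\<lambda>xp hp. psum (sweedler \<rho> S) (\<lambda>xs hs.
         psum (sweedler \<rho> M) (\<lambda>xm hm. psum (sweedler \<rho> xm) (\<lambda>ys ks. ?D xp hp xs hs (prod_list ys) (prod_list ks) hm))))"
  proof -
    let ?z = "PhiMap sA \<rho> g M"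
    have "compE (PhiMap sA \<rho> f) i n (PhiMap sA \<rho> g) as = PhiMap sA \<rho> f (P @ [?z] @ S)"
      unfolding compE_def P_def M_def S_def ..
    also have "\<dots> = psum (sweedler \<rho> P) (\<lambda>xp hp. psum (sweedler \<rho> [?z]) (\<lambda>xz hz. psum (sweedler \<rho> S) (\<lambda>xs hs.
         sA (f (hp @ hz @ hs)) (prod_list (xp @ xz @ xs)))))"
      unfolding Phi_psum[of _ _ f] by (simp only: psum_sw_append append_assoc)
    also have "\<dots> = psum (sweedler \<rho> P) (\<lambda>xp hp. psum (\<rho> ?z) (\<lambda>y k. psum (sweedler \<rho> S) (\<lambda>xs hs.
         sA (f (hp @ [k] @ hs)) (prod_list xp * (y * prod_list xs)))))"
      by (simp only: psum_sw_single) (simp add: mult.assoc)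
    also have "\<dots> = psum (sweedler \<rho> P) (\<lambda>xp hp. psum (sweedler \<rho> S) (\<lambda>xs hs. psum (\<rho> ?z) (\<lambda>y k.
         sA (f (hp @ [k] @ hs)) (prod_list xp * (y * prod_list xs)))))"
      by (rule psum_cong) (rule psum_swap)
    also have "\<dots> = psum (sweedler \<rho> P) (\<lambda>xp hp. psum (sweedler \<rho> S) (\<lambda>xs hs.
         psum (sweedler \<rho> M) (\<lambda>xm hm. psum (sweedler \<rho> xm) (\<lambda>ys ks. ?D xp hp xs hs (prod_list ys) (prod_list ks) hm))))"
    proof (rule psum_cong, rule psum_cong)
      fix xp hp xs hs assume m: "(xp, hp) \<in> set (sweedler \<rho> P)" "(xs, hs) \<in> set (sweedler \<rho> S)"
      then have l: "length hp = i - 1" "length hs = m - i" using sw_length lP lS by metis+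
      note b = bilB[OF l, of xp xs]
      show "psum (\<rho> ?z) (\<lambda>y k. sA (f (hp @ [k] @ hs)) (prod_list xp * (y * prod_list xs)))
        = psum (sweedler \<rho> M) (\<lambda>xm hm. psum (sweedler \<rho> xm) (\<lambda>ys ks. ?D xp hp xs hs (prod_list ys) (prod_list ks) hm))"
        unfolding Phi_psum[of _ _ g] Rpsum[OF b] R2[OF b] Rprod[OF b] psum_module[OF modA]
        by (simp add: mult.commute)
    qed
    finally show ?thesis .
  qed
  show ?thesis unfolding LHS RHS
  proof (rule psum_cong, rule psum_cong)
    fix xp hp xs hs assume "(xp, hp) \<in> set (sweedler \<rho> P)" "(xs, hs) \<in> set (sweedler \<rho> S)"
    then have "length hp = i - 1" "length hs = m - i" using sw_length lP lS by metis+
    from coassoc_list[OF linD[OF this]]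
    show "psum (sweedler \<rho> M) (\<lambda>xm hm. psum (sweedler \<Delta> hm) (\<lambda>us vs. ?D xp hp xs hs (prod_list xm) (prod_list us) vs))
      = psum (sweedler \<rho> M) (\<lambda>xm hm. psum (sweedler \<rho> xm) (\<lambda>ys ks. ?D xp hp xs hs (prod_list ys) (prod_list ks) hm))"
      by simp
  qed
qed

end


lemma psum_sum: "psum L (\<lambda>a b. \<Sum>i\<in>I. G i a b) = (\<Sum>i\<in>I. psum L (G i))"
  by (induction L) (auto simp: sum.distrib)

context setting
begin

lemma Phi_add: "PhiMap sA \<rho> (\<lambda>hs. F hs + G hs) as = PhiMap sA \<rho> F as + PhiMap sA \<rho> G as"
  unfolding Phi_psum by (simp add: module.scale_left_distrib[OF modA] psum_add)

lemma Phi_neg: "PhiMap sA \<rho> (\<lambda>hs. - F hs) as = - PhiMap sA \<rho> F as"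
  unfolding Phi_psum by (simp add: module.scale_minus_left[OF modA] psum_neg)

lemma Phi_diff: "PhiMap sA \<rho> (\<lambda>hs. F hs - G hs) as = PhiMap sA \<rho> F as - PhiMap sA \<rho> G as"
  using Phi_add[of F "\<lambda>hs. - G hs"] Phi_neg[of G] by simp

lemma Phi_sgnv: "PhiMap sA \<rho> (\<lambda>hs. sgnv k (F hs)) as = sgnv k (PhiMap sA \<rho> F as)"
  unfolding sgnv_def using Phi_neg[of F] by simp

lemma Phi_sum: "PhiMap sA \<rho> (\<lambda>hs. \<Sum>i\<in>I. F i hs) as = (\<Sum>i\<in>I. PhiMap sA \<rho> (F i) as)"
  unfolding Phi_psum by (simp add: module.scale_sum_left[OF modA] psum_sum)

lemma Phi_lin: "PhiMap sA \<rho> (\<lambda>hs. c * f hs + g hs) as = sA c (PhiMap sA \<rho> f as) + PhiMap sA \<rho> g as"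
  unfolding Phi_psum
  by (simp add: module.scale_left_distrib[OF modA] psum_add psum_module[OF modA] module.scale_scale[OF modA])

lemma Phi_split: "PhiMap sA \<rho> f (P @ [z] @ S) = psum (sweedler \<rho> P) (\<lambda>xp hp. psum (sweedler \<rho> S) (\<lambda>xs hs.
      psum (\<rho> z) (\<lambda>y k. sA (f (hp @ [k] @ hs)) (prod_list xp * (y * prod_list xs)))))"
proof -
  have "PhiMap sA \<rho> f (P @ [z] @ S) = psum (sweedler \<rho> P) (\<lambda>xp hp. psum (sweedler \<rho> [z]) (\<lambda>xz hz. psum (sweedler \<rho> S) (\<lambda>xs hs.
         sA (f (hp @ hz @ hs)) (prod_list (xp @ xz @ xs)))))"
    unfolding Phi_psum by (simp only: psum_sw_append append_assoc)
  also have "\<dots> = psum (sweedler \<rho> P) (\<lambda>xp hp. psum (\<rho> z) (\<lambda>y k. psum (sweedler \<rho> S) (\<lambda>xs hs.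
         sA (f (hp @ [k] @ hs)) (prod_list xp * (y * prod_list xs)))))"
    by (simp only: psum_sw_single) (simp add: mult.assoc)
  also have "\<dots> = psum (sweedler \<rho> P) (\<lambda>xp hp. psum (sweedler \<rho> S) (\<lambda>xs hs. psum (\<rho> z) (\<lambda>y k.
         sA (f (hp @ [k] @ hs)) (prod_list xp * (y * prod_list xs)))))"
    by (rule psum_cong) (rule psum_swap)
  finally show ?thesis .
qed

lemma bilF:
  assumes fa: "\<And>x y. f (hp @ (x + y) # hs) = f (hp @ x # hs) + f (hp @ y # hs)"
    and fs: "\<And>c x. f (hp @ sH c x # hs) = c * f (hp @ x # hs)"
  shows "bil (\<lambda>y k. sA (f (hp @ [k] @ hs)) (prod_list xp * (y * prod_list xs)))"
proof -
  interpret mA: module sA by (rule modA)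
  show ?thesis unfolding bil_def
    by (auto simp: fa fs distrib_left distrib_right mA.scale_left_distrib mA.scale_right_distrib
        kA1[symmetric] kA2[symmetric] mult_ac)
qed

lemma Phi_multilin: "multilin sH (*) n f \<Longrightarrow> multilin sA sA n (PhiMap sA \<rho> f)"
proof -
  assume f: "multilin sH (*) n f"
  have b: "bil (\<lambda>y k. sA (f (hp @ [k] @ hs)) (prod_list xp * (y * prod_list xs)))"
    if "length hp + length hs + 1 = n" for hp hs xp xs
    using f that unfolding multilin_def by (intro bilF) auto
  show ?thesis unfolding multilin_def
  proof (intro conjI allI impI)
    fix P S :: "'a list" and x y assume l: "length P + length S + 1 = n"
    have "PhiMap sA \<rho> f (P @ [x + y] @ S) = psum (sweedler \<rho> P) (\<lambda>xp hp. psum (sweedler \<rho> S) (\<lambda>xs hs.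
      psum (\<rho> (x + y)) (\<lambda>z k. sA (f (hp @ [k] @ hs)) (prod_list xp * (z * prod_list xs)))))" by (rule Phi_split)
    also have "\<dots> = psum (sweedler \<rho> P) (\<lambda>xp hp. psum (sweedler \<rho> S) (\<lambda>xs hs.
      psum (\<rho> x) (\<lambda>z k. sA (f (hp @ [k] @ hs)) (prod_list xp * (z * prod_list xs)))
      + psum (\<rho> y) (\<lambda>z k. sA (f (hp @ [k] @ hs)) (prod_list xp * (z * prod_list xs)))))"
    proof (rule psum_cong, rule psum_cong)
      fix xp hp xs hs assume "(xp, hp) \<in> set (sweedler \<rho> P)" "(xs, hs) \<in> set (sweedler \<rho> S)"
      then have "length hp + length hs + 1 = n" using sw_length l by metis
      from R1[OF b[OF this]]
      show "psum (\<rho> (x + y)) (\<lambda>z k. sA (f (hp @ [k] @ hs)) (prod_list xp * (z * prod_list xs))) =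
         psum (\<rho> x) (\<lambda>z k. sA (f (hp @ [k] @ hs)) (prod_list xp * (z * prod_list xs))) +
         psum (\<rho> y) (\<lambda>z k. sA (f (hp @ [k] @ hs)) (prod_list xp * (z * prod_list xs)))" .
    qed
    also have "\<dots> = PhiMap sA \<rho> f (P @ [x] @ S) + PhiMap sA \<rho> f (P @ [y] @ S)"
      by (simp only: Phi_split psum_add)
    finally show "PhiMap sA \<rho> f (P @ [x + y] @ S) = PhiMap sA \<rho> f (P @ [x] @ S) + PhiMap sA \<rho> f (P @ [y] @ S)" .
  next
    fix P S :: "'a list" and x c assume l: "length P + length S + 1 = n"
    have "PhiMap sA \<rho> f (P @ [sA c x] @ S) = psum (sweedler \<rho> P) (\<lambda>xp hp. psum (sweedler \<rho> S) (\<lambda>xs hs.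
      psum (\<rho> (sA c x)) (\<lambda>z k. sA (f (hp @ [k] @ hs)) (prod_list xp * (z * prod_list xs)))))" by (rule Phi_split)
    also have "\<dots> = psum (sweedler \<rho> P) (\<lambda>xp hp. psum (sweedler \<rho> S) (\<lambda>xs hs.
      sA c (psum (\<rho> x) (\<lambda>z k. sA (f (hp @ [k] @ hs)) (prod_list xp * (z * prod_list xs))))))"
    proof (rule psum_cong, rule psum_cong)
      fix xp hp xs hs assume "(xp, hp) \<in> set (sweedler \<rho> P)" "(xs, hs) \<in> set (sweedler \<rho> S)"
      then have "length hp + length hs + 1 = n" using sw_length l by metis
      from R2[OF b[OF this]]
      show "psum (\<rho> (sA c x)) (\<lambda>z k. sA (f (hp @ [k] @ hs)) (prod_list xp * (z * prod_list xs))) =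
         sA c (psum (\<rho> x) (\<lambda>z k. sA (f (hp @ [k] @ hs)) (prod_list xp * (z * prod_list xs))))" .
    qed
    also have "\<dots> = sA c (PhiMap sA \<rho> f (P @ [x] @ S))"
      by (simp only: Phi_split psum_module[OF modA])
    finally show "PhiMap sA \<rho> f (P @ [sA c x] @ S) = sA c (PhiMap sA \<rho> f (P @ [x] @ S))" .
  qed
qed

abbreviation muH :: "'h list \<Rightarrow> 'k" where "muH \<equiv> \<lambda>hs. \<epsilon> (hs ! 0 * hs ! 1)"
abbreviation muA :: "'a list \<Rightarrow> 'a" where "muA \<equiv> \<lambda>as. as ! 0 * as ! 1"

lemma bil_counit: "bil (\<lambda>y k. sA (\<epsilon> k) y)"
proof -
  interpret mA: module sA by (rule modA)
  show ?thesis unfolding bil_def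
    by (auto simp: eps_add eps_sm mA.scale_left_distrib mA.scale_right_distrib mA.scale_left_commute mult.commute)
qed

lemma Phi_mu2: "PhiMap sA \<rho> muH [a, b] = a * b"
proof -
  have "a * b = psum (\<rho> (a * b)) (\<lambda>y k. sA (\<epsilon> k) y)" by (rule counit[symmetric])
  also have "\<dots> = psum (\<rho> a) (\<lambda>a' h. psum (\<rho> b) (\<lambda>b' k. sA (\<epsilon> (h * k)) (a' * b')))"
    by (rule R3[OF bil_counit])
  also have "\<dots> = PhiMap sA \<rho> muH [a, b]"
    unfolding Phi_psum by (simp only: psum_sw_cons psum_sw_single) simp
  finally show ?thesis ..
qed

lemma Phi_mu: "length l = 2 \<Longrightarrow> PhiMap sA \<rho> muH l = muA l"
  using Phi_mu2 by (cases l rule: remdups_adj.cases) auto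

lemma muH_linat: "1 \<le> i \<Longrightarrow> i \<le> 2 \<Longrightarrow> linat i 2 muH"
proof -
  assume i: "1 \<le> i" "i \<le> 2"
  have l: "length us = i - 1 \<Longrightarrow> length vs = 2 - i \<Longrightarrow> (i = 1 \<and> us = [] \<and> (\<exists>v. vs = [v])) \<or> (i = 2 \<and> (\<exists>u. us = [u]) \<and> vs = [])"
    for us vs :: "'h list"
  proof -
    assume a: "length us = i - 1" "length vs = 2 - i"
    have "i = 1 \<or> i = 2" using i by auto
    then show ?thesis using a by (auto simp: length_Suc_conv)
  qed
  show ?thesis unfolding linat_def
  proof (intro conjI allI impI; elim conjE)
    fix us vs :: "'h list" and x y assume "length us = i - 1" "length vs = 2 - i"
    from l[OF this] show "\<epsilon> ((us @ [x + y] @ vs) ! 0 * (us @ [x + y] @ vs) ! 1) =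
      \<epsilon> ((us @ [x] @ vs) ! 0 * (us @ [x] @ vs) ! 1) + \<epsilon> ((us @ [y] @ vs) ! 0 * (us @ [y] @ vs) ! 1)"
      by (auto simp: distrib_left distrib_right eps_add)
  next
    fix us vs :: "'h list" and c x assume "length us = i - 1" "length vs = 2 - i"
    from l[OF this] show "\<epsilon> ((us @ [sH c x] @ vs) ! 0 * (us @ [sH c x] @ vs) ! 1) =
      c * \<epsilon> ((us @ [x] @ vs) ! 0 * (us @ [x] @ vs) ! 1)"
      by (auto simp: kH1[symmetric] kH2[symmetric] eps_sm)
  qed
qed

lemma linat_multilin: "(\<And>i. 1 \<le> i \<Longrightarrow> i \<le> m \<Longrightarrow> linat i m f) \<Longrightarrow> multilin sH (*) m f"
proof -
  assume a: "\<And>i. 1 \<le> i \<Longrightarrow> i \<le> m \<Longrightarrow> linat i m f"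
  show ?thesis unfolding multilin_def
  proof (intro conjI allI impI)
    fix xs ys :: "'h list" and x y assume l: "length xs + length ys + 1 = m"
    then have "linat (length xs + 1) m f" by (intro a) auto
    then show "f (xs @ [x + y] @ ys) = f (xs @ [x] @ ys) + f (xs @ [y] @ ys)"
      unfolding linat_def using l by auto
  next
    fix xs ys :: "'h list" and x c assume l: "length xs + length ys + 1 = m"
    then have "linat (length xs + 1) m f" by (intro a) auto
    then show "f (xs @ [sH c x] @ ys) = c * f (xs @ [x] @ ys)"
      unfolding linat_def using l by auto
  qed
qed

lemma muH_multilin: "multilin sH (*) 2 muH"
  by (rule linat_multilin) (rule muH_linat)

lemma multilin_linat: "multilin sH (*) m f \<Longrightarrow> 1 \<le> i \<Longrightarrow> i \<le> m \<Longrightarrow> linat i m f"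
  unfolding multilin_def linat_def by auto

end


context setting
begin

lemma comp_pres: "multilin sH (*) m f \<Longrightarrow> multilin sH (*) n g \<Longrightarrow> 1 \<le> i \<Longrightarrow> i \<le> m \<Longrightarrow> length as = m + n - 1 \<Longrightarrow>
  PhiMap sA \<rho> (compH sH \<Delta> f i n g) as = compE (PhiMap sA \<rho> f) i n (PhiMap sA \<rho> g) as"
  by (rule comp_main) (auto intro: multilin_linat)

lemma compE_outer: "length (take (i - 1) as @ [G (take n (drop (i - 1) as))] @ drop (i - 1 + n) as) = 2 \<Longrightarrow>
   compE (PhiMap sA \<rho> muH) i n G as = compE muA i n G as"
  unfolding compE_def by (rule Phi_mu)

lemma compE_inner: "length (take n (drop (i - 1) as)) = 2 \<Longrightarrow> compE F i n (PhiMap sA \<rho> muH) as = compE F i n muA as"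
  unfolding compE_def by (simp only: Phi_mu)

lemma Phi_unit1: "PhiMap sA \<rho> (\<lambda>hs. \<epsilon> (hs ! 0)) [a] = a"
  unfolding Phi_psum by (simp only: psum_sw_single) (simp add: counit)

lemma Phi_one: "PhiMap sA \<rho> (\<lambda>_. 1) [] = 1"
  unfolding Phi_psum using modA by (simp add: module.scale_one)

lemma Phi_cobd:
  assumes f: "multilin sH (*) n f" and len: "length as = n + 1"
  shows "PhiMap sA \<rho> (cobd (compH sH \<Delta>) muH n f) as = cobd compE muA n (PhiMap sA \<rho> f) as"
proof -
  have e1: "PhiMap sA \<rho> (compH sH \<Delta> muH 2 n f) as = compE muA 2 n (PhiMap sA \<rho> f) as"
    using comp_pres[OF muH_multilin f, of 2 as] len compE_outer[of 2 as "PhiMap sA \<rho> f" n] by auto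
  have e3: "PhiMap sA \<rho> (compH sH \<Delta> muH 1 n f) as = compE muA 1 n (PhiMap sA \<rho> f) as"
    using comp_pres[OF muH_multilin f, of 1 as] len compE_outer[of 1 as "PhiMap sA \<rho> f" n] by auto
  have e2: "PhiMap sA \<rho> (compH sH \<Delta> f i 2 muH) as = compE (PhiMap sA \<rho> f) i 2 muA as" if "i \<in> {1..n}" for i
    using comp_pres[OF f muH_multilin, of i as] len compE_inner[of 2 i as "PhiMap sA \<rho> f"] that by auto
  have e2': "(\<Sum>i = 1..n. sgnv (int i) (PhiMap sA \<rho> (compH sH \<Delta> f i 2 muH) as))
    = (\<Sum>i = 1..n. sgnv (int i) (compE (PhiMap sA \<rho> f) i 2 muA as))"
    by (rule sum.cong[OF refl]) (simp only: e2)
  show ?thesis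
    unfolding cobd_def Phi_add Phi_sum Phi_sgnv e1 e3 e2' by (rule refl)
qed

lemma compH_mu_linat: "linat (m + 1) (m + 1) (compH sH \<Delta> muH 1 m f)"
  unfolding linat_def compH_psum
  by (auto simp: distrib_left eps_add kH2[symmetric] eps_sm)

lemma Phi_cupp:
  assumes f: "multilin sH (*) m f" and g: "multilin sH (*) n g" and len: "length as = m + n"
  shows "PhiMap sA \<rho> (cupp (compH sH \<Delta>) muH f m g n) as = cupp compE muA (PhiMap sA \<rho> f) m (PhiMap sA \<rho> g) n as"
proof -
  define L where "L = take m as @ [PhiMap sA \<rho> g (take n (drop m as))] @ drop (m + n) as"
  have lL: "length L = m + 1" unfolding L_def using len by simp
  have "PhiMap sA \<rho> (cupp (compH sH \<Delta>) muH f m g n) as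
     = compE (PhiMap sA \<rho> (compH sH \<Delta> muH 1 m f)) (m + 1) n (PhiMap sA \<rho> g) as"
    unfolding cupp_def by (rule comp_main[OF compH_mu_linat g]) (use len in auto)
  also have "\<dots> = PhiMap sA \<rho> (compH sH \<Delta> muH 1 m f) L"
    unfolding compE_def L_def by simp
  also have "\<dots> = compE (PhiMap sA \<rho> muH) 1 m (PhiMap sA \<rho> f) L"
    by (rule comp_pres[OF muH_multilin f]) (use lL in auto)
  also have "\<dots> = compE muA 1 m (PhiMap sA \<rho> f) L"
    by (rule compE_outer) (use lL in auto)
  also have "\<dots> = cupp compE muA (PhiMap sA \<rho> f) m (PhiMap sA \<rho> g) n as"
    unfolding cupp_def compE_def[of _ "m + 1"] L_def by simp
  finally show ?thesis .
qed

lemma Phi_gbracket: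
  assumes f: "multilin sH (*) m f" and g: "multilin sH (*) n g" and len: "length as = m + n - 1"
  shows "PhiMap sA \<rho> (gbracket (compH sH \<Delta>) f m g n) as = gbracket compE (PhiMap sA \<rho> f) m (PhiMap sA \<rho> g) n as"
proof -
  have e1: "PhiMap sA \<rho> (compH sH \<Delta> f i n g) as = compE (PhiMap sA \<rho> f) i n (PhiMap sA \<rho> g) as" if "i \<in> {1..m}" for i
    using comp_pres[OF f g, of i as] len that by auto
  have e2: "PhiMap sA \<rho> (compH sH \<Delta> g i m f) as = compE (PhiMap sA \<rho> g) i m (PhiMap sA \<rho> f) as" if "i \<in> {1..n}" for i
    using comp_pres[OF g f, of i as] len that by (auto simp: add.commute)
  show ?thesis
    unfolding gbracket_def circbar_def Phi_diff Phi_sum Phi_sgnv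
    by (simp add: e1 e2)
qed

lemma main: "(\<forall>n f. multilin sH (*) n f \<longrightarrow> multilin sA sA n (PhiMap sA \<rho> f))
   \<and> (\<forall>f g c as. PhiMap sA \<rho> (\<lambda>hs. c * f hs + g hs) as = sA c (PhiMap sA \<rho> f as) + PhiMap sA \<rho> g as)
   \<and> (\<forall>m n i f g. multilin sH (*) m f \<and> multilin sH (*) n g \<and> 1 \<le> i \<and> i \<le> m \<longrightarrow>
        (\<forall>as. length as = m + n - 1 \<longrightarrow>
           PhiMap sA \<rho> (compH sH \<Delta> f i n g) as = compE (PhiMap sA \<rho> f) i n (PhiMap sA \<rho> g) as))
   \<and> (\<forall>a. PhiMap sA \<rho> (\<lambda>hs. \<epsilon> (hs ! 0)) [a] = a)
   \<and> (\<forall>a b. PhiMap sA \<rho> (\<lambda>hs. \<epsilon> (hs ! 0 * hs ! 1)) [a, b] = a * b)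
   \<and> PhiMap sA \<rho> (\<lambda>_. 1) [] = 1
   \<and> (\<forall>n f. multilin sH (*) n f \<longrightarrow> (\<forall>as. length as = n + 1 \<longrightarrow>
        PhiMap sA \<rho> (cobd (compH sH \<Delta>) (\<lambda>hs. \<epsilon> (hs ! 0 * hs ! 1)) n f) as
        = cobd compE (\<lambda>as. as ! 0 * as ! 1) n (PhiMap sA \<rho> f) as))
   \<and> (\<forall>m n f g. multilin sH (*) m f \<and> multilin sH (*) n g \<longrightarrow> (\<forall>as. length as = m + n \<longrightarrow>
        PhiMap sA \<rho> (cupp (compH sH \<Delta>) (\<lambda>hs. \<epsilon> (hs ! 0 * hs ! 1)) f m g n) as
        = cupp compE (\<lambda>as. as ! 0 * as ! 1) (PhiMap sA \<rho> f) m (PhiMap sA \<rho> g) n as))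
   \<and> (\<forall>m n f g. multilin sH (*) m f \<and> multilin sH (*) n g \<longrightarrow> (\<forall>as. length as = m + n - 1 \<longrightarrow>
        PhiMap sA \<rho> (gbracket (compH sH \<Delta>) f m g n) as
        = gbracket compE (PhiMap sA \<rho> f) m (PhiMap sA \<rho> g) n as))"
  apply (intro conjI allI impI)
  apply ((elim conjE)?; rule Phi_multilin Phi_lin comp_pres Phi_unit1 Phi_mu2 Phi_one Phi_cobd Phi_cupp Phi_gbracket; assumption)+
  done

end

theorem lemma7p2:
  fixes sH :: "'k::comm_ring_1 \<Rightarrow> 'h::ring_1 \<Rightarrow> 'h"
    and sA :: "'k \<Rightarrow> 'a::ring_1 \<Rightarrow> 'a"
    and \<Delta> :: "'h \<Rightarrow> ('h \<times> 'h) list"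
    and \<epsilon> :: "'h \<Rightarrow> 'k"
    and \<rho> :: "'a \<Rightarrow> ('a \<times> 'h) list"
  assumes "bialgebra sH \<Delta> \<epsilon>"
    and "comodule_algebra sA sH \<Delta> \<epsilon> \<rho>"
  shows
    \<comment> \<open>\<Phi> maps O^H(n) into End(A)(n), k-linearly\<close>
    "(\<forall>n f. multilin sH (*) n f \<longrightarrow> multilin sA sA n (PhiMap sA \<rho> f))
   \<and> (\<forall>f g c as. PhiMap sA \<rho> (\<lambda>hs. c * f hs + g hs) as = sA c (PhiMap sA \<rho> f as) + PhiMap sA \<rho> g as)
    \<comment> \<open>compatibility with partial compositions\<close>
   \<and> (\<forall>m n i f g. multilin sH (*) m f \<and> multilin sH (*) n g \<and> 1 \<le> i \<and> i \<le> m \<longrightarrow>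
        (\<forall>as. length as = m + n - 1 \<longrightarrow>
           PhiMap sA \<rho> (compH sH \<Delta> f i n g) as = compE (PhiMap sA \<rho> f) i n (PhiMap sA \<rho> g) as))
    \<comment> \<open>identity, multiplication and unit are preserved\<close>
   \<and> (\<forall>a. PhiMap sA \<rho> (\<lambda>hs. \<epsilon> (hs ! 0)) [a] = a)
   \<and> (\<forall>a b. PhiMap sA \<rho> (\<lambda>hs. \<epsilon> (hs ! 0 * hs ! 1)) [a, b] = a * b)
   \<and> PhiMap sA \<rho> (\<lambda>_. 1) [] = 1
    \<comment> \<open>consequences on cochains: chain map, cup product and bracket preserved\<close>
   \<and> (\<forall>n f. multilin sH (*) n f \<longrightarrow> (\<forall>as. length as = n + 1 \<longrightarrow>
        PhiMap sA \<rho> (cobd (compH sH \<Delta>) (\<lambda>hs. \<epsilon> (hs ! 0 * hs ! 1)) n f) as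
        = cobd compE (\<lambda>as. as ! 0 * as ! 1) n (PhiMap sA \<rho> f) as))
   \<and> (\<forall>m n f g. multilin sH (*) m f \<and> multilin sH (*) n g \<longrightarrow> (\<forall>as. length as = m + n \<longrightarrow>
        PhiMap sA \<rho> (cupp (compH sH \<Delta>) (\<lambda>hs. \<epsilon> (hs ! 0 * hs ! 1)) f m g n) as
        = cupp compE (\<lambda>as. as ! 0 * as ! 1) (PhiMap sA \<rho> f) m (PhiMap sA \<rho> g) n as))
   \<and> (\<forall>m n f g. multilin sH (*) m f \<and> multilin sH (*) n g \<longrightarrow> (\<forall>as. length as = m + n - 1 \<longrightarrow>
        PhiMap sA \<rho> (gbracket (compH sH \<Delta>) f m g n) as
        = gbracket compE (PhiMap sA \<rho> f) m (PhiMap sA \<rho> g) n as))"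
proof -
  interpret setting sH sA \<Delta> \<epsilon> \<rho> using assms by unfold_locales
  show ?thesis by (rule main)
qed

end
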